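(* Let $\mathsf{CS}$ be a constant specification for $\mathsf{LPC}^+$. For every set of formulas $T$ and formula $\phi$: if $T\models_{\mathsf{LPC}^+_{\mathsf{CS}}}\phi$, then $T\vdash_{\mathsf{LPC}^+_{\mathsf{CS}}}\phi$.
   Context: Language: countable sets $\mathsf{Const}$, $\mathsf{Var}$, $\mathsf{Prop}$; terms $t ::= c \mid x \mid t\cdot t \mid t+t \mid\ !t$; formulas $\phi ::= p \mid \neg\phi \mid \phi\wedge\phi \mid \phi\supset\phi \mid \phi>\phi \mid t{:}\phi$; $\mathsf{Tm},\mathsf{Fm}$ the sets of terms and formulas. Axiom schemes of $\mathsf{LPC}^+$: (A1) all instances of classical tautologies; (A2) $(\phi>(\psi\supset\chi))\supset((\phi>\psi)\supset(\phi>\chi))$; (A3) $\phi>\phi$; (A4) $(\phi>\psi)\supset(\phi\supset\psi)$; (A5) $(s{:}(\phi>\psi)\wedge t{:}\phi) > (s\cdot t){:}\psi$; (A6) $s{:}\phi > (s+t){:}\phi$; (A7) $t{:}\phi>(s+t){:}\phi$; (A8) $t{:}\phi>\phi$; (A9) $t{:}\phi > (!t){:}t{:}\phi$. A constant specification $\mathsf{CS}$ is a set of $c{:}\phi$ with $c\in\mathsf{Const}$, $\phi$ an instance of (A1)–(A9). $\mathsf{LPC}^+_{\mathsf{CS}}$: axioms (A1)–(A9) and $\mathsf{CS}$; rules (MP) from $\phi,\phi\supset\psi$ infer $\psi$, and (RCN) from $\psi$ infer $\phi>\psi$. For a set $T$: $T\vdash\phi$ iff $\vdash(\psi_1\wedge\cdots\wedge\psi_n)\supset\phi$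 for some $\psi_1,\dots,\psi_n\in T$, $n\ge0$. Relational models $\mathcal M=(W,W_N,R_{Fm},R_{Tm},V)$: $W$ nonempty, $W_N\subseteq W$ nonempty (normal states); $R_\phi\subseteq W_N\times W_N$ for each formula $\phi$; $R_t\subseteq W\times W$ for each term $t$; $V(w)\subseteq\mathsf{Prop}$ for $w\in W_N$, $V(w)\subseteq\mathsf{Fm}$ for $w\in W\setminus W_N$. Truth: at non-normal $w$, $w\models\phi$ iff $\phi\in V(w)$; at normal $w$: $p$ iff $p\in V(w)$, $\neg,\wedge,\supset$ classical, $\phi>\psi$ iff $R_\phi(w)\subseteq[\psi]$, $t{:}\phi$ iff $R_t(w)\subseteq[\phi]$, with $[\phi]=\{w\in W: w\models\phi\}$. An $\mathsf{LPC}^+_{\mathsf{CS}}$-model is a relational model such that for all $w\in W_N$: (1) $R_\phi(w)\subseteq[\phi]$ for all $\phi$; (2) if $w\in[\phi]$ then $w\in R_\phi(w)$; (3) $R_c(w)\subseteq[\phi]$ for each $c{:}\phi\in\mathsf{CS}$; (4) $R_{s+t}(w)\subseteq R_s(w)\cap R_t(w)$; (5) for all $v\in R_{s\cdot t}(w)$ and all $\phi,\psi$: if $w\in[s{:}(\phi>\psi)\wedge t{:}\phi]$ then $v\in[\psi]$; (6) $wR_tw$ for all $t$; (7) for all $t$ and $v,u\in W$, if $wR_{!t}v$ and $vR_tu$ then $wR_tu$. $T\models_{\mathsf{LPC}^+_{\mathsf{CS}}}\phi$ iff for every $\mathsf{LPC}^+_{\mathsf{CS}}$-model and every $w\in W_N$,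 if every member of $T$ is true at $w$ then $\phi$ is true at $w$. *)

theory Defs
  imports Main "HOL-Library.Countable"
begin

datatype ('c, 'v) tm =
    TConst 'c
  | TVar 'v
  | TApp "('c, 'v) tm" "('c, 'v) tm"
  | TSum "('c, 'v) tm" "('c, 'v) tm"
  | TBang "('c, 'v) tm"

datatype ('c, 'v, 'p) fm =
    Atom 'p
  | Neg "('c, 'v, 'p) fm"
  | Conj "('c, 'v, 'p) fm" "('c, 'v, 'p) fm"
  | Imp "('c, 'v, 'p) fm" "('c, 'v, 'p) fm"
  | Cond "('c, 'v, 'p) fm" "('c, 'v, 'p) fm"
  | Just "('c, 'v) tm" "('c, 'v, 'p) fm"

fun peval :: "(('c, 'v, 'p) fm \<Rightarrow> bool) \<Rightarrow> ('c, 'v, 'p) fm \<Rightarrow> bool" where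
  "peval v (Neg a) = (\<not> peval v a)"
| "peval v (Conj a b) = (peval v a \<and> peval v b)"
| "peval v (Imp a b) = (peval v a \<longrightarrow> peval v b)"
| "peval v (Atom p) = v (Atom p)"
| "peval v (Cond a b) = v (Cond a b)"
| "peval v (Just t a) = v (Just t a)"

definition taut_instance :: "('c, 'v, 'p) fm \<Rightarrow> bool" where
  "taut_instance \<phi> \<longleftrightarrow> (\<forall>v. peval v \<phi>)"

definition is_axiom :: "('c, 'v, 'p) fm \<Rightarrow> bool" where
  "is_axiom \<chi> \<longleftrightarrow>
     taut_instance \<chi>
   \<or> (\<exists>\<phi> \<psi> \<theta>. \<chi> = Imp (Cond \<phi> (Imp \<psi> \<theta>)) (Imp (Cond \<phi> \<psi>) (Cond \<phi> \<theta>)))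
   \<or> (\<exists>\<phi>. \<chi> = Cond \<phi> \<phi>)
   \<or> (\<exists>\<phi> \<psi>. \<chi> = Imp (Cond \<phi> \<psi>) (Imp \<phi> \<psi>))
   \<or> (\<exists>s t \<phi> \<psi>. \<chi> = Cond (Conj (Just s (Cond \<phi> \<psi>)) (Just t \<phi>)) (Just (TApp s t) \<psi>))
   \<or> (\<exists>s t \<phi>. \<chi> = Cond (Just s \<phi>) (Just (TSum s t) \<phi>))
   \<or> (\<exists>s t \<phi>. \<chi> = Cond (Just t \<phi>) (Just (TSum s t) \<phi>))
   \<or> (\<exists>t \<phi>. \<chi> = Cond (Just t \<phi>) \<phi>)
   \<or> (\<exists>t \<phi>. \<chi> = Cond (Just t \<phi>) (Just (TBang t) (Just t \<phi>)))"

definition const_spec :: "('c, 'v, 'p) fm set \<Rightarrow> bool" where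
  "const_spec CS \<longleftrightarrow> (\<forall>\<chi>\<in>CS. \<exists>c \<phi>. \<chi> = Just (TConst c) \<phi> \<and> is_axiom \<phi>)"

inductive deriv :: "('c, 'v, 'p) fm set \<Rightarrow> ('c, 'v, 'p) fm \<Rightarrow> bool" for CS where
  ax: "is_axiom \<phi> \<Longrightarrow> deriv CS \<phi>"
| cs: "\<phi> \<in> CS \<Longrightarrow> deriv CS \<phi>"
| mp: "deriv CS \<phi> \<Longrightarrow> deriv CS (Imp \<phi> \<psi>) \<Longrightarrow> deriv CS \<psi>"
| rcn: "deriv CS \<psi> \<Longrightarrow> deriv CS (Cond \<phi> \<psi>)"

fun conjs :: "('c, 'v, 'p) fm list \<Rightarrow> ('c, 'v, 'p) fm" where
  "conjs [] = undefined"
| "conjs [a] = a"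
| "conjs (a # b # xs) = Conj a (conjs (b # xs))"

definition derives :: "('c, 'v, 'p) fm set \<Rightarrow> ('c, 'v, 'p) fm set \<Rightarrow> ('c, 'v, 'p) fm \<Rightarrow> bool" where
  "derives CS T \<phi> \<longleftrightarrow>
     deriv CS \<phi> \<or> (\<exists>\<psi>s. \<psi>s \<noteq> [] \<and> set \<psi>s \<subseteq> T \<and> deriv CS (Imp (conjs \<psi>s) \<phi>))"

record ('w, 'c, 'v, 'p) rmodel =
  W  :: "'w set"
  WN :: "'w set"
  RF :: "('c, 'v, 'p) fm \<Rightarrow> 'w \<Rightarrow> 'w set"
  RT :: "('c, 'v) tm \<Rightarrow> 'w \<Rightarrow> 'w set"
  V  :: "'w \<Rightarrow> ('c, 'v, 'p) fm set"

text \<open>At normal states the propositional valuation is V(w) restricted to atoms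
  (we require V(w) to consist of atoms there); at non-normal states V(w) is a set
  of formulas.\<close>
fun sat :: "('w, 'c, 'v, 'p) rmodel \<Rightarrow> 'w \<Rightarrow> ('c, 'v, 'p) fm \<Rightarrow> bool" where
  "sat M w (Atom p) = (Atom p \<in> V M w)"
| "sat M w (Neg a) =
     (if w \<in> WN M then \<not> sat M w a else Neg a \<in> V M w)"
| "sat M w (Conj a b) =
     (if w \<in> WN M then sat M w a \<and> sat M w b else Conj a b \<in> V M w)"
| "sat M w (Imp a b) =
     (if w \<in> WN M then sat M w a \<longrightarrow> sat M w b else Imp a b \<in> V M w)"
| "sat M w (Cond a b) =
     (if w \<in> WN M then (\<forall>u \<in> RF M a w. u \<in> W M \<and> sat M u b) else Cond a b \<in> V M w)"
| "sat M w (Just t a) =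
     (if w \<in> WN M then (\<forall>u \<in> RT M t w. u \<in> W M \<and> sat M u a) else Just t a \<in> V M w)"

definition ext :: "('w, 'c, 'v, 'p) rmodel \<Rightarrow> ('c, 'v, 'p) fm \<Rightarrow> 'w set" where
  "ext M \<phi> = {u \<in> W M. sat M u \<phi>}"

definition rel_model :: "('w, 'c, 'v, 'p) rmodel \<Rightarrow> bool" where
  "rel_model M \<longleftrightarrow>
     W M \<noteq> {} \<and> WN M \<noteq> {} \<and> WN M \<subseteq> W M
   \<and> (\<forall>\<phi> w. RF M \<phi> w \<subseteq> WN M \<and> (w \<notin> WN M \<longrightarrow> RF M \<phi> w = {}))
   \<and> (\<forall>t w. RT M t w \<subseteq> W M \<and> (w \<notin> W M \<longrightarrow> RT M t w = {}))
   \<and> (\<forall>w \<in> WN M. V M w \<subseteq> range Atom)"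

definition lpc_model :: "('c, 'v, 'p) fm set \<Rightarrow> ('w, 'c, 'v, 'p) rmodel \<Rightarrow> bool" where
  "lpc_model CS M \<longleftrightarrow> rel_model M \<and>
    (\<forall>w \<in> WN M.
        (\<forall>\<phi>. RF M \<phi> w \<subseteq> ext M \<phi>)
      \<and> (\<forall>\<phi>. w \<in> ext M \<phi> \<longrightarrow> w \<in> RF M \<phi> w)
      \<and> (\<forall>c \<phi>. Just (TConst c) \<phi> \<in> CS \<longrightarrow> RT M (TConst c) w \<subseteq> ext M \<phi>)
      \<and> (\<forall>s t. RT M (TSum s t) w \<subseteq> RT M s w \<inter> RT M t w)
      \<and> (\<forall>s t. \<forall>v \<in> RT M (TApp s t) w. \<forall>\<phi> \<psi>.
            w \<in> ext M (Conj (Just s (Cond \<phi> \<psi>)) (Just t \<phi>)) \<longrightarrow> v \<in> ext M \<psi>)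
      \<and> (\<forall>t. w \<in> RT M t w)
      \<and> (\<forall>t. \<forall>v \<in> W M. \<forall>u \<in> W M. v \<in> RT M (TBang t) w \<and> u \<in> RT M t v \<longrightarrow> u \<in> RT M t w))"

text \<open>HOL cannot quantify over all types of states; we
  quantify over all models whose states are drawn from the (large) type of sets
  of sets of formulas. This makes the hypothesis of completeness weaker, hence
  the completeness statement stronger than (and implying) the informal one.\<close>
definition sem_conseq ::
  "('c, 'v, 'p) fm set \<Rightarrow> ('c, 'v, 'p) fm set \<Rightarrow> ('c, 'v, 'p) fm \<Rightarrow> bool" where
  "sem_conseq CS T \<phi> \<longleftrightarrow>
     (\<forall>M :: (('c, 'v, 'p) fm set set, 'c, 'v, 'p) rmodel.
        lpc_model CS M \<longrightarrow> (\<forall>w \<in> WN M. (\<forall>\<psi> \<in> T. sat M w \<psi>) \<longrightarrow> sat M w \<phi>))"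

end

theory Submission
  imports Defs
begin

fun imps :: "('c, 'v, 'p) fm list \<Rightarrow> ('c, 'v, 'p) fm \<Rightarrow> ('c, 'v, 'p) fm" where
  "imps [] b = b"
| "imps (a # as) b = Imp a (imps as b)"

lemma peval_imps[simp]: "peval v (imps as b) = ((\<forall>a\<in>set as. peval v a) \<longrightarrow> peval v b)"
  by (induction as) auto

lemma peval_conjs: "xs \<noteq> [] \<Longrightarrow> peval v (conjs xs) = (\<forall>a\<in>set xs. peval v a)"
  by (induction xs rule: conjs.induct) auto

definition bot :: "('c, 'v, 'p) fm" where
  "bot = Neg (Imp undefined undefined)"

lemma peval_bot[simp]: "peval v bot = False"
  by (simp add: bot_def)

lemma deriv_imps: "deriv CS (imps as B) \<Longrightarrow> \<forall>a\<in>set as. deriv CS a \<Longrightarrow> deriv CS B"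
  by (induction as) (auto intro: deriv.mp)

lemma taut_rule: "(\<And>v. peval v (imps as B)) \<Longrightarrow> \<forall>a\<in>set as. deriv CS a \<Longrightarrow> deriv CS B"
  by (rule deriv_imps, rule deriv.ax) (auto simp: is_axiom_def taut_instance_def)

definition pf :: "('c, 'v, 'p) fm set \<Rightarrow> ('c, 'v, 'p) fm set \<Rightarrow> ('c, 'v, 'p) fm \<Rightarrow> bool" where
  "pf CS G a \<longleftrightarrow> (\<exists>ps. set ps \<subseteq> G \<and> deriv CS (imps ps a))"

lemma pf_deriv: "deriv CS a \<Longrightarrow> pf CS G a"
  unfolding pf_def by (rule exI[of _ "[]"]) simp

lemma pf_mem: "a \<in> G \<Longrightarrow> pf CS G a"
  unfolding pf_def
  by (rule exI[of _ "[a]"]) (auto intro: taut_rule[of "[]"])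

lemma pf_mp: "pf CS G a \<Longrightarrow> pf CS G (Imp a b) \<Longrightarrow> pf CS G b"
proof -
  assume "pf CS G a" "pf CS G (Imp a b)"
  then obtain ps qs where ps: "set ps \<subseteq> G" "deriv CS (imps ps a)"
    and qs: "set qs \<subseteq> G" "deriv CS (imps qs (Imp a b))" unfolding pf_def by blast
  have "deriv CS (imps (ps @ qs) b)"
    by (rule taut_rule[of "[imps ps a, imps qs (Imp a b)]"]) (use ps qs in auto)
  then show ?thesis unfolding pf_def using ps qs by (intro exI[of _ "ps @ qs"]) auto
qed

lemma pf_imps: "pf CS G (imps as B) \<Longrightarrow> \<forall>a\<in>set as. pf CS G a \<Longrightarrow> pf CS G B"
  by (induction as) (auto intro: pf_mp)

lemma pf_taut: "(\<And>v. peval v (imps as B)) \<Longrightarrow> \<forall>a\<in>set as. pf CS G a \<Longrightarrow> pf CS G B"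
  by (rule pf_imps, rule pf_deriv, rule deriv.ax) (auto simp: is_axiom_def taut_instance_def)

lemma pf_ded: "pf CS (insert a G) b \<Longrightarrow> pf CS G (Imp a b)"
proof -
  assume "pf CS (insert a G) b"
  then obtain ps where ps: "set ps \<subseteq> insert a G" "deriv CS (imps ps b)" unfolding pf_def by blast
  let ?qs = "filter (\<lambda>x. x \<noteq> a) ps"
  have "deriv CS (imps ?qs (Imp a b))"
    by (rule taut_rule[of "[imps ps b]"]) (use ps in auto)
  then show ?thesis unfolding pf_def using ps by (intro exI[of _ ?qs]) auto
qed

definition cons :: "('c, 'v, 'p) fm set \<Rightarrow> ('c, 'v, 'p) fm set \<Rightarrow> bool" where
  "cons CS G \<longleftrightarrow> \<not> pf CS G bot"

definition mcs :: "('c, 'v, 'p) fm set \<Rightarrow> ('c, 'v, 'p) fm set \<Rightarrow> bool" where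
  "mcs CS G \<longleftrightarrow> cons CS G \<and> (\<forall>a. a \<notin> G \<longrightarrow> \<not> cons CS (insert a G))"

lemma mcs_pf: "mcs CS G \<Longrightarrow> pf CS G a \<Longrightarrow> a \<in> G"
proof (rule ccontr)
  assume m: "mcs CS G" and p: "pf CS G a" and n: "a \<notin> G"
  then have "pf CS (insert a G) bot" unfolding mcs_def cons_def by blast
  then have "pf CS G (Imp a bot)" by (rule pf_ded)
  then have "pf CS G bot" using p by (rule pf_mp[rotated])
  then show False using m unfolding mcs_def cons_def by blast
qed

lemma mcs_deriv: "mcs CS G \<Longrightarrow> deriv CS a \<Longrightarrow> a \<in> G"
  by (rule mcs_pf, assumption, rule pf_deriv)

lemma mcs_taut: "mcs CS G \<Longrightarrow> (\<And>v. peval v (imps as B)) \<Longrightarrow> \<forall>a\<in>set as. a \<in> G \<Longrightarrow> B \<in> G"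
  by (rule mcs_pf, assumption, rule pf_taut) (auto intro: pf_mem)

lemma mcs_neg: "mcs CS G \<Longrightarrow> (Neg a \<in> G) = (a \<notin> G)"
proof
  assume m: "mcs CS G"
  show "Neg a \<in> G \<Longrightarrow> a \<notin> G"
  proof
    assume "Neg a \<in> G" "a \<in> G"
    then have "pf CS G bot" by (intro pf_taut[of "[a, Neg a]"]) (auto intro: pf_mem)
    then show False using m unfolding mcs_def cons_def by blast
  qed
  show "a \<notin> G \<Longrightarrow> Neg a \<in> G"
  proof -
    assume "a \<notin> G"
    then have "pf CS (insert a G) bot" using m unfolding mcs_def cons_def by blast
    then have "pf CS G (Imp a bot)" by (rule pf_ded)
    then have "pf CS G (Neg a)" by (intro pf_taut[of "[Imp a bot]"]) auto
    then show ?thesis using m by (rule mcs_pf[rotated])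
  qed
qed

lemma mcs_conj: "mcs CS G \<Longrightarrow> (Conj a b \<in> G) = (a \<in> G \<and> b \<in> G)"
  by (auto intro: mcs_taut[of _ _ "[Conj a b]"] mcs_taut[of _ _ "[a, b]"])

lemma mcs_imp: "mcs CS G \<Longrightarrow> (Imp a b \<in> G) = (a \<in> G \<longrightarrow> b \<in> G)"
proof -
  assume m: "mcs CS G"
  show ?thesis
  proof (cases "a \<in> G")
    case True
    then show ?thesis using m by (auto intro: mcs_taut[of _ _ "[a, Imp a b]"] mcs_taut[of _ _ "[b]"])
  next
    case False
    then have "Neg a \<in> G" using m mcs_neg by blast
    then show ?thesis using m False by (auto intro: mcs_taut[of _ _ "[Neg a]"])
  qed
qed


lemma ax_in: "mcs CS G \<Longrightarrow> is_axiom a \<Longrightarrow> a \<in> G"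
  by (rule mcs_deriv, assumption, rule deriv.ax)

lemma A2: "is_axiom (Imp (Cond a (Imp b c)) (Imp (Cond a b) (Cond a c)))"
  unfolding is_axiom_def by blast
lemma A3: "is_axiom (Cond a a)"
  unfolding is_axiom_def by blast
lemma A4: "is_axiom (Imp (Cond a b) (Imp a b))"
  unfolding is_axiom_def by blast
lemma A5: "is_axiom (Cond (Conj (Just s (Cond a b)) (Just t a)) (Just (TApp s t) b))"
  unfolding is_axiom_def by blast
lemma A6: "is_axiom (Cond (Just s a) (Just (TSum s t) a))"
  unfolding is_axiom_def by blast
lemma A8: "is_axiom (Cond (Just t a) a)"
  unfolding is_axiom_def by blast

lemma mcs_cond_mp: "mcs CS G \<Longrightarrow> Cond a b \<in> G \<Longrightarrow> a \<in> G \<Longrightarrow> b \<in> G"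
  using ax_in[OF _ A4[of a b]] mcs_imp by blast

lemma mcs_K: "mcs CS G \<Longrightarrow> Cond a (Imp b c) \<in> G \<Longrightarrow> Cond a b \<in> G \<Longrightarrow> Cond a c \<in> G"
  using ax_in[OF _ A2[of a b c]] mcs_imp by blast

lemma mcs_K_imps: "mcs CS G \<Longrightarrow> Cond a (imps xs c) \<in> G \<Longrightarrow> \<forall>x\<in>set xs. Cond a x \<in> G \<Longrightarrow> Cond a c \<in> G"
  by (induction xs) (auto intro: mcs_K)

lemma mcs_nonempty: "mcs CS G \<Longrightarrow> G \<noteq> {}"
  using ax_in[OF _ A3] by blast

lemma chain_fin:
  assumes ch: "\<forall>X\<in>C. \<forall>Y\<in>C. X \<subseteq> Y \<or> Y \<subseteq> X"
  shows "set xs \<subseteq> G \<union> \<Union>C \<Longrightarrow> set xs \<subseteq> G \<or> (\<exists>X\<in>C. set xs \<subseteq> G \<union> X)"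
proof (induction xs)
  case Nil then show ?case by simp
next
  case (Cons x xs)
  then have IH: "set xs \<subseteq> G \<or> (\<exists>X\<in>C. set xs \<subseteq> G \<union> X)" and x: "x \<in> G \<union> \<Union>C" by auto
  show ?case
  proof (cases "x \<in> G")
    case True then show ?thesis using IH by auto
  next
    case False
    then obtain Y where Y: "Y \<in> C" "x \<in> Y" using x by auto
    from IH show ?thesis
    proof
      assume "set xs \<subseteq> G" then show ?thesis using Y by auto
    next
      assume "\<exists>X\<in>C. set xs \<subseteq> G \<union> X"
      then obtain X where X: "X \<in> C" "set xs \<subseteq> G \<union> X" by blast
      show ?thesis using ch[rule_format, OF X(1) Y(1)] X Y by auto
    qed
  qed
qed

lemma lindenbaum:
  assumes "cons CS G"
  shows "\<exists>D. mcs CS D \<and> G \<subseteq> D"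
proof -
  let ?A = "{D. G \<subseteq> D \<and> cons CS D}"
  have "\<exists>M\<in>?A. \<forall>X\<in>?A. M \<subseteq> X \<longrightarrow> X = M"
  proof (rule subset_Zorn)
    fix C assume ch: "subset.chain ?A C"
    then have CA: "C \<subseteq> ?A" by (simp add: subset.chain_def)
    have cc: "\<forall>X\<in>C. \<forall>Y\<in>C. X \<subseteq> Y \<or> Y \<subseteq> X"
      using ch by (simp add: subset.chain_def) (metis psubset_imp_subset subset_refl)
    have "cons CS (G \<union> \<Union>C)"
      unfolding cons_def pf_def
    proof
      assume "\<exists>ps. set ps \<subseteq> G \<union> \<Union>C \<and> deriv CS (imps ps bot)"
      then obtain ps where ps: "set ps \<subseteq> G \<union> \<Union>C" "deriv CS (imps ps bot)" by blast
      from chain_fin[OF cc ps(1)] show False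
      proof
        assume "set ps \<subseteq> G"
        then show False using ps assms unfolding cons_def pf_def by blast
      next
        assume "\<exists>X\<in>C. set ps \<subseteq> G \<union> X"
        then obtain X where X: "X \<in> C" "set ps \<subseteq> G \<union> X" by blast
        then have "G \<union> X = X" "cons CS X" using CA by auto
        then show False using ps X unfolding cons_def pf_def by auto
      qed
    qed
    then show "\<exists>U\<in>?A. \<forall>X\<in>C. X \<subseteq> U" by auto
  qed
  then obtain M where M: "G \<subseteq> M" "cons CS M" and mx: "\<forall>X\<in>?A. M \<subseteq> X \<longrightarrow> X = M" by blast
  have "mcs CS M" unfolding mcs_def
  proof (intro conjI allI impI M(2))
    fix a assume "a \<notin> M"
    show "\<not> cons CS (insert a M)"
    proof
      assume "cons CS (insert a M)"
      then have "insert a M = M" using mx M by (metis (no_types, lifting) mem_Collect_eq subset_insertI subset_insertI2)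
      then show False using \<open>a \<notin> M\<close> by auto
    qed
  qed
  then show ?thesis using M by blast
qed

lemma cond_exist:
  assumes m: "mcs CS G" and n: "Cond a b \<notin> G"
  shows "\<exists>D. mcs CS D \<and> a \<in> D \<and> {c. Cond a c \<in> G} \<subseteq> D \<and> b \<notin> D"
proof -
  let ?S = "insert a (insert (Neg b) {c. Cond a c \<in> G})"
  have "cons CS ?S" unfolding cons_def pf_def
  proof
    assume "\<exists>ps. set ps \<subseteq> ?S \<and> deriv CS (imps ps bot)"
    then obtain ps where ps: "set ps \<subseteq> ?S" "deriv CS (imps ps bot)" by blast
    let ?qs = "filter (\<lambda>x. x \<noteq> a \<and> x \<noteq> Neg b) ps"
    have "deriv CS (imps ?qs (Imp a b))"
    proof (rule taut_rule[of "[imps ps bot]"])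
      fix v
      have "(\<forall>x\<in>set ?qs. peval v x) \<Longrightarrow> peval v a \<Longrightarrow> \<not> peval v b \<Longrightarrow> (\<forall>x\<in>set ps. peval v x)"
      proof
        fix x assume h: "\<forall>x\<in>set ?qs. peval v x" "peval v a" "\<not> peval v b" and x: "x \<in> set ps"
        show "peval v x"
        proof (cases "x = a \<or> x = Neg b")
          case True then show ?thesis using h by auto
        next
          case False then have "x \<in> set ?qs" using x by simp
          then show ?thesis using h(1) by blast
        qed
      qed
      then show "peval v (imps [imps ps bot] (imps ?qs (Imp a b)))"
        unfolding peval_imps list.set ball_simps(5,7) peval_bot peval.simps by blast
    qed (use ps in simp)
    then have "deriv CS (Cond a (imps ?qs (Imp a b)))" by (rule deriv.rcn)
    then have "Cond a (imps ?qs (Imp a b)) \<in> G" using m by (rule mcs_deriv[rotated])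
    moreover have "\<forall>x\<in>set ?qs. Cond a x \<in> G" using ps(1) by auto
    ultimately have "Cond a (Imp a b) \<in> G" by (rule mcs_K_imps[OF m])
    then have "Cond a b \<in> G" by (rule mcs_K[OF m _ ax_in[OF m A3[of a]]])
    then show False using n by simp
  qed
  then obtain D where "mcs CS D" "?S \<subseteq> D" using lindenbaum by blast
  then show ?thesis using mcs_neg[of CS D b] by auto
qed


definition cm :: "('c, 'v, 'p) fm set \<Rightarrow> (('c, 'v, 'p) fm set set, 'c, 'v, 'p) rmodel" where
  "cm CS = (let N = {{G} | G. mcs CS G} in
     \<lparr>W = UNIV, WN = N,
      RF = (\<lambda>a w. if w \<in> N then {{D} | D. mcs CS D \<and> a \<in> D \<and> {c. Cond a c \<in> \<Union>w} \<subseteq> D} else {}),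
      RT = (\<lambda>t w. if w \<in> N then insert w {u. u \<notin> N \<and> {c. Just t c \<in> \<Union>w} \<subseteq> \<Union>u} else {}),
      V = (\<lambda>w. if w \<in> N then \<Union>w \<inter> range Atom else \<Union>w)\<rparr>)"

lemma cm_simps:
  "W (cm CS) = UNIV" "WN (cm CS) = {{G} | G. mcs CS G}"
  "RF (cm CS) a w = (if w \<in> WN (cm CS) then {{D} | D. mcs CS D \<and> a \<in> D \<and> {c. Cond a c \<in> \<Union>w} \<subseteq> D} else {})"
  "RT (cm CS) t w = (if w \<in> WN (cm CS) then insert w {u. u \<notin> WN (cm CS) \<and> {c. Just t c \<in> \<Union>w} \<subseteq> \<Union>u} else {})"
  "V (cm CS) w = (if w \<in> WN (cm CS) then \<Union>w \<inter> range Atom else \<Union>w)"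
  by (simp_all add: cm_def Let_def)

lemma sat_nonnormal: "u \<notin> WN M \<Longrightarrow> sat M u a = (a \<in> V M u)"
  by (cases a) auto

lemma in_WN: "({G} \<in> WN (cm CS)) = mcs CS G"
  by (auto simp: cm_simps)

lemma truth:
  "mcs CS G \<Longrightarrow> sat (cm CS) {G} a = (a \<in> G)"
proof (induction a arbitrary: G)
  case (Atom p) then show ?case by (auto simp: cm_simps)
next
  case (Neg a) then show ?case by (simp add: in_WN mcs_neg)
next
  case (Conj a b) then show ?case by (simp add: in_WN mcs_conj)
next
  case (Imp a b) then show ?case by (simp add: in_WN mcs_imp)
next
  case (Cond a b)
  have "(\<forall>u\<in>RF (cm CS) a {G}. u \<in> W (cm CS) \<and> sat (cm CS) u b) = (Cond a b \<in> G)"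
  proof
    assume H: "\<forall>u\<in>RF (cm CS) a {G}. u \<in> W (cm CS) \<and> sat (cm CS) u b"
    show "Cond a b \<in> G"
    proof (rule ccontr)
      assume "Cond a b \<notin> G"
      then obtain D where D: "mcs CS D" "a \<in> D" "{c. Cond a c \<in> G} \<subseteq> D" "b \<notin> D"
        using cond_exist Cond.prems by blast
      then have "{D} \<in> RF (cm CS) a {G}" using Cond.prems by (auto simp: cm_simps)
      then show False using H Cond.IH(2)[OF D(1)] D(4) by blast
    qed
  next
    assume C: "Cond a b \<in> G"
    show "\<forall>u\<in>RF (cm CS) a {G}. u \<in> W (cm CS) \<and> sat (cm CS) u b"
    proof
      fix u assume "u \<in> RF (cm CS) a {G}"
      then obtain D where D: "u = {D}" "mcs CS D" "{c. Cond a c \<in> G} \<subseteq> D"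
        using Cond.prems by (auto simp: cm_simps)
      then have "b \<in> D" using C by blast
      then show "u \<in> W (cm CS) \<and> sat (cm CS) u b" using D Cond.IH(2)[OF D(2)] by (simp add: cm_simps)
    qed
  qed
  then show ?case using Cond.prems by (simp add: in_WN)
next
  case (Just t a)
  have "(\<forall>u\<in>RT (cm CS) t {G}. u \<in> W (cm CS) \<and> sat (cm CS) u a) = (Just t a \<in> G)"
  proof
    assume H: "\<forall>u\<in>RT (cm CS) t {G}. u \<in> W (cm CS) \<and> sat (cm CS) u a"
    show "Just t a \<in> G"
    proof (rule ccontr)
      assume n: "Just t a \<notin> G"
      let ?u = "{{c. Just t c \<in> G}, {}}"
      have nn: "?u \<notin> WN (cm CS)"
      proof
        assume "?u \<in> WN (cm CS)"
        then obtain D where "?u = {D}" "mcs CS D" unfolding cm_simps by blast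
        then have "{} \<in> {D}" by blast
        then have "D = {}" by simp
        then show False using mcs_nonempty[OF \<open>mcs CS D\<close>] by simp
      qed
      moreover have "{G} \<in> WN (cm CS)" using Just.prems by (simp add: in_WN)
      ultimately have "?u \<in> RT (cm CS) t {G}" unfolding cm_simps(4)[of CS t "{G}"] by simp
      then have "sat (cm CS) ?u a" using H by blast
      then have "a \<in> V (cm CS) ?u" by (rule iffD1[OF sat_nonnormal[OF nn]])
      moreover have "V (cm CS) ?u = \<Union> ?u" unfolding cm_simps(5)[of CS ?u] by (simp only: nn if_False)
      ultimately have "a \<in> \<Union> ?u" by simp
      then have "Just t a \<in> G" by blast
      then show False using n by simp
    qed
  next
    assume J: "Just t a \<in> G"
    have aG: "a \<in> G" using mcs_cond_mp[OF Just.prems ax_in[OF Just.prems A8[of t a]] J] .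
    show "\<forall>u\<in>RT (cm CS) t {G}. u \<in> W (cm CS) \<and> sat (cm CS) u a"
    proof
      fix u assume u: "u \<in> RT (cm CS) t {G}"
      show "u \<in> W (cm CS) \<and> sat (cm CS) u a"
      proof (cases "u = {G}")
        case True then show ?thesis using aG Just.IH Just.prems by (simp add: cm_simps)
      next
        case False
        have GW: "{G} \<in> WN (cm CS)" using Just.prems by (simp add: in_WN)
        have nn: "u \<notin> WN (cm CS)" and "{c. Just t c \<in> G} \<subseteq> \<Union>u"
          using u False GW unfolding cm_simps(4)[of CS t "{G}"] by auto
        then have "a \<in> V (cm CS) u" using J by (simp add: cm_simps) blast
        then show ?thesis using sat_nonnormal[OF nn] by (simp add: cm_simps)
      qed
    qed
  qed
  then show ?case using Just.prems by (simp add: in_WN)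
qed

lemma A7: "is_axiom (Cond (Just t a) (Just (TSum s t) a))"
  unfolding is_axiom_def by blast

lemma mcs_cond_ax: "mcs CS G \<Longrightarrow> is_axiom (Cond a b) \<Longrightarrow> a \<in> G \<Longrightarrow> b \<in> G"
  using mcs_cond_mp ax_in by blast

lemma WN_cm: "w \<in> WN (cm CS) \<Longrightarrow> \<exists>G. w = {G} \<and> mcs CS G"
  by (auto simp: cm_simps)

lemma cm_model:
  assumes G0: "mcs CS G0"
  shows "lpc_model CS (cm CS)"
  unfolding lpc_model_def
proof (intro conjI ballI)
  show "rel_model (cm CS)"
    unfolding rel_model_def using G0 by (auto simp: cm_simps)
next
  fix w assume w: "w \<in> WN (cm CS)"
  then obtain G where wG: "w = {G}" and m: "mcs CS G" using WN_cm by blast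
  have wN: "{G} \<in> WN (cm CS)" using w wG by simp
  have ext: "u \<in> ext (cm CS) a \<longleftrightarrow> sat (cm CS) u a" for u a by (simp add: ext_def cm_simps)
  have RTw: "\<And>t u. u \<in> RT (cm CS) t {G} \<longleftrightarrow> u = {G} \<or> (u \<notin> WN (cm CS) \<and> {c. Just t c \<in> G} \<subseteq> \<Union>u)"
    using wN unfolding cm_simps(4) by simp
  have justsat: "\<And>t a. Just t a \<in> G \<Longrightarrow> u \<in> RT (cm CS) t {G} \<Longrightarrow> sat (cm CS) u a" for u
  proof -
    fix t a assume "Just t a \<in> G" "u \<in> RT (cm CS) t {G}"
    moreover have "sat (cm CS) {G} (Just t a) = (Just t a \<in> G)" by (rule truth[OF m])
    ultimately show "sat (cm CS) u a" using wN by simp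
  qed
  show "\<forall>\<phi>. RF (cm CS) \<phi> w \<subseteq> ext (cm CS) \<phi>"
  proof (intro allI subsetI)
    fix a u assume "u \<in> RF (cm CS) a w"
    then obtain D where "u = {D}" "mcs CS D" "a \<in> D" using w by (auto simp: cm_simps)
    then show "u \<in> ext (cm CS) a" using truth ext by blast
  qed
  show "\<forall>\<phi>. w \<in> ext (cm CS) \<phi> \<longrightarrow> w \<in> RF (cm CS) \<phi> w"
  proof (intro allI impI)
    fix a assume "w \<in> ext (cm CS) a"
    then have "sat (cm CS) {G} a" using ext wG by blast
    then have "a \<in> G" by (rule truth[OF m, THEN iffD1])
    moreover have "{c. Cond a c \<in> G} \<subseteq> G" using mcs_cond_mp[OF m] \<open>a \<in> G\<close> by blast
    ultimately show "w \<in> RF (cm CS) a w" using m wG w by (auto simp: cm_simps)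
  qed
  show "\<forall>c \<phi>. Just (TConst c) \<phi> \<in> CS \<longrightarrow> RT (cm CS) (TConst c) w \<subseteq> ext (cm CS) \<phi>"
  proof (intro allI impI subsetI)
    fix c a u assume "Just (TConst c) a \<in> CS" "u \<in> RT (cm CS) (TConst c) w"
    moreover have "Just (TConst c) a \<in> G" using calculation(1) m by (blast intro: mcs_deriv deriv.cs)
    ultimately show "u \<in> ext (cm CS) a" using justsat ext wG by blast
  qed
  show "\<forall>s t. RT (cm CS) (TSum s t) w \<subseteq> RT (cm CS) s w \<inter> RT (cm CS) t w"
  proof (intro allI subsetI)
    fix s t u assume u: "u \<in> RT (cm CS) (TSum s t) w"
    have "{c. Just s c \<in> G} \<subseteq> {c. Just (TSum s t) c \<in> G}" "{c. Just t c \<in> G} \<subseteq> {c. Just (TSum s t) c \<in> G}"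
      using mcs_cond_ax[OF m A6] mcs_cond_ax[OF m A7] by blast+
    then show "u \<in> RT (cm CS) s w \<inter> RT (cm CS) t w" using u unfolding wG Int_iff RTw by blast
  qed
  show "\<forall>s t. \<forall>v\<in>RT (cm CS) (TApp s t) w. \<forall>\<phi> \<psi>.
            w \<in> ext (cm CS) (Conj (Just s (Cond \<phi> \<psi>)) (Just t \<phi>)) \<longrightarrow> v \<in> ext (cm CS) \<psi>"
  proof (intro allI ballI impI)
    fix s t v a b assume v: "v \<in> RT (cm CS) (TApp s t) w"
      and "w \<in> ext (cm CS) (Conj (Just s (Cond a b)) (Just t a))"
    then have "sat (cm CS) {G} (Conj (Just s (Cond a b)) (Just t a))" using ext wG by blast
    then have "Conj (Just s (Cond a b)) (Just t a) \<in> G" by (rule truth[OF m, THEN iffD1])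
    then have "Just (TApp s t) b \<in> G" using mcs_cond_ax[OF m A5] by blast
    then show "v \<in> ext (cm CS) b" using justsat v wG ext by blast
  qed
  show "\<forall>t. w \<in> RT (cm CS) t w" using RTw wG by simp
  show "\<forall>t. \<forall>v\<in>W (cm CS). \<forall>u\<in>W (cm CS). v \<in> RT (cm CS) (TBang t) w \<and> u \<in> RT (cm CS) t v \<longrightarrow> u \<in> RT (cm CS) t w"
  proof (intro allI ballI impI)
    fix t v u assume h: "v \<in> RT (cm CS) (TBang t) w \<and> u \<in> RT (cm CS) t v"
    show "u \<in> RT (cm CS) t w"
    proof (cases "v = w")
      case True then show ?thesis using h by simp
    next
      case False
      then have "v \<notin> WN (cm CS)" using h unfolding wG RTw by blast
      then have "RT (cm CS) t v = {}" unfolding cm_simps(4)[of CS t v] by (simp only: if_False)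
      then show ?thesis using h by simp
    qed
  qed
qed

theorem mainTheorem10:
  fixes CS :: "('c::countable, 'v::countable, 'p::countable) fm set"
    and T :: "('c, 'v, 'p) fm set" and \<phi> :: "('c, 'v, 'p) fm"
  assumes "const_spec CS"
    and "sem_conseq CS T \<phi>"
  shows "derives CS T \<phi>"
proof (rule ccontr)
  assume nd: "\<not> derives CS T \<phi>"
  have "cons CS (insert (Neg \<phi>) T)" unfolding cons_def pf_def
  proof
    assume "\<exists>ps. set ps \<subseteq> insert (Neg \<phi>) T \<and> deriv CS (imps ps bot)"
    then obtain ps where ps: "set ps \<subseteq> insert (Neg \<phi>) T" "deriv CS (imps ps bot)" by blast
    let ?qs = "filter (\<lambda>x. x \<noteq> Neg \<phi>) ps"
    have key: "(\<forall>x\<in>set ?qs. peval v x) \<Longrightarrow> \<not> peval v \<phi> \<Longrightarrow> (\<forall>x\<in>set ps. peval v x)" for v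
    proof
      fix x assume h: "\<forall>x\<in>set ?qs. peval v x" "\<not> peval v \<phi>" and x: "x \<in> set ps"
      show "peval v x"
      proof (cases "x = Neg \<phi>")
        case True then show ?thesis using h by simp
      next
        case False then have "x \<in> set ?qs" using x by simp
        then show ?thesis using h(1) by blast
      qed
    qed
    show False
    proof (cases "?qs = []")
      case True
      have "deriv CS \<phi>"
      proof (rule taut_rule[of "[imps ps bot]"])
        fix v
        show "peval v (imps [imps ps bot] \<phi>)"
          using key[of v] True unfolding peval_imps list.set ball_simps(5,7) peval_bot by auto
      qed (use ps in simp)
      then show False using nd unfolding derives_def by blast
    next
      case False
      have "deriv CS (Imp (conjs ?qs) \<phi>)"
      proof (rule taut_rule[of "[imps ps bot]"])
        fix v
        show "peval v (imps [imps ps bot] (Imp (conjs ?qs) \<phi>))"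
          using key[of v] peval_conjs[OF False, of v]
          unfolding peval_imps list.set ball_simps(5,7) peval_bot peval.simps by blast
      qed (use ps in simp)
      moreover have "set ?qs \<subseteq> T" using ps(1) by auto
      ultimately show False using nd False unfolding derives_def by blast
    qed
  qed
  then obtain G where G: "mcs CS G" "insert (Neg \<phi>) T \<subseteq> G" using lindenbaum by blast
  have "lpc_model CS (cm CS)" by (rule cm_model[OF G(1)])
  moreover have "{G} \<in> WN (cm CS)" using G by (simp add: in_WN)
  moreover have "\<forall>\<psi>\<in>T. sat (cm CS) {G} \<psi>" using G truth by blast
  ultimately have "sat (cm CS) {G} \<phi>" using assms(2) unfolding sem_conseq_def by blast
  then have "\<phi> \<in> G" using truth[OF G(1)] by simp
  moreover have "Neg \<phi> \<in> G" using G by simp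
  ultimately show False using mcs_neg[OF G(1)] by blast
qed

end
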